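(* For every integer $r\geq 9$, the Coxeter polynomial of the Nakayama algebra $N_{r+7}(r)$ is $$\chi_{(r+7,r)}(\lambda)=(\lambda+1)(\lambda^6-\lambda^3+1)(\lambda^r+1).$$ Consequently, the Coxeter number of $N_{r+7}(r)$ equals $\mathrm{lcm}(2r,9)$.
   Context: $N_n(r)$ is the path algebra over an algebraically closed field $k$ of the quiver $1\leftarrow2\leftarrow\cdots\leftarrow n$ modulo the ideal generated by all paths of length $r$. For a finite-dimensional algebra $\Lambda$ with indecomposable projectives $P(1),\dots,P(n)$, the Cartan matrix $C$ has entries $c_{ij}=\dim_k\mathrm{Hom}_\Lambda(P(i),P(j))$; the Coxeter matrix is $\phi_\Lambda=-C^{-t}C$; the Coxeter polynomial is $\det(\lambda E_n-\phi_\Lambda)$; the Coxeter number is the least $m\geq1$ with $\phi_\Lambda^m=E_n$ (identity matrix). *)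

theory Defs
  imports "Jordan_Normal_Form.Char_Poly" "Jordan_Normal_Form.Gauss_Jordan_Elimination"
begin

text \<open>Cartan matrix of the Nakayama algebra N_n(r) = k[1 <- 2 <- ... <- n]/(paths of length r).
  Vertices i = 1..n are represented by indices i-1 = 0..n-1.  The entry c_ij is the
  dimension of Hom(P(i),P(j)), which is 1 if there is a nonzero path between the two vertices
  (from j down to i, i.e. i <= j and j - i < r) and 0 otherwise.\<close>
definition nakayama_cartan :: "nat \<Rightarrow> nat \<Rightarrow> rat mat" where
  "nakayama_cartan n r = mat n n (\<lambda>(i, j). if i \<le> j \<and> j - i < r then 1 else 0)"

definition coxeter_matrix :: "rat mat \<Rightarrow> rat mat" where
  "coxeter_matrix C = - ((the (mat_inverse (transpose_mat C))) * C)"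

definition coxeter_polynomial :: "rat mat \<Rightarrow> rat poly" where
  "coxeter_polynomial C = char_poly (coxeter_matrix C)"

definition is_coxeter_number :: "rat mat \<Rightarrow> nat \<Rightarrow> bool" where
  "is_coxeter_number C m \<longleftrightarrow>
     m \<ge> 1 \<and> coxeter_matrix C ^\<^sub>m m = 1\<^sub>m (dim_row C) \<and>
     (\<forall>k. 1 \<le> k \<and> k < m \<longrightarrow> coxeter_matrix C ^\<^sub>m k \<noteq> 1\<^sub>m (dim_row C))"

end

theory Submission
  imports Defs
begin

lemma sum_delta_mult: fixes g :: "nat \<Rightarrow> rat"
  shows
  "(\<Sum>k\<in>{0..<n}. (if P \<and> k = a then (x::rat) else 0) * g k) = (if P \<and> a < n then x * g a else 0)"
proof -
  have "(\<Sum>k\<in>{0..<n}. (if P \<and> k = a then (x::rat) else 0) * g k) = (\<Sum>k\<in>{0..<n}. if k = a then (if P then x * g k else 0) else 0)"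
    by (rule sum.cong) auto
  also have "\<dots> = (if a \<in> {0..<n} then (if P then x * g a else 0) else 0)" by (rule sum.delta) simp
  finally show ?thesis by auto
qed


definition DI :: "nat \<Rightarrow> rat mat" where
  "DI r = mat (r+7) (r+7) (\<lambda>(i,k). (if k = i then 1 else 0) - (if 1 \<le> i \<and> k = i - 1 then 1 else 0)
     + (if r \<le> i \<and> k = i - r then 1 else 0) - (if r + 1 \<le> i \<and> k = i - r - 1 then 1 else 0))"

lemma DI_mult:
  assumes M: "M \<in> carrier_mat (r+7) nc" and i: "i < r+7" and j: "j < nc"
  shows "(DI r * M) $$ (i,j) = M $$ (i,j) - (if 1 \<le> i then M $$ (i-1,j) else 0)
     + (if r \<le> i then M $$ (i-r,j) else 0) - (if r+1 \<le> i then M $$ (i-r-1,j) else 0)"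
proof -
  have "(DI r * M) $$ (i,j) = (\<Sum>k\<in>{0..<r+7}. ((if k = i then 1 else 0) - (if 1 \<le> i \<and> k = i - 1 then 1 else 0)
     + (if r \<le> i \<and> k = i - r then 1 else 0) - (if r + 1 \<le> i \<and> k = i - r - 1 then 1 else 0)) * M $$ (k,j))"
    using M i j by (simp add: DI_def scalar_prod_def)
  also have "\<dots> = (\<Sum>k\<in>{0..<r+7}. (if True \<and> k = i then 1 else 0) * M $$ (k,j))
     - (\<Sum>k\<in>{0..<r+7}. (if 1 \<le> i \<and> k = i - 1 then 1 else 0) * M $$ (k,j))
     + (\<Sum>k\<in>{0..<r+7}. (if r \<le> i \<and> k = i - r then 1 else 0) * M $$ (k,j))
     - (\<Sum>k\<in>{0..<r+7}. (if r + 1 \<le> i \<and> k = i - r - 1 then 1 else 0) * M $$ (k,j))"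
    by (simp add: algebra_simps sum.distrib sum_subtractf)
  also have "\<dots> = M $$ (i,j) - (if 1 \<le> i then M $$ (i-1,j) else 0)
     + (if r \<le> i then M $$ (i-r,j) else 0) - (if r+1 \<le> i then M $$ (i-r-1,j) else 0)"
    unfolding sum_delta_mult using i by auto
  finally show ?thesis .
qed

lemma DI_inv: assumes r: "r \<ge> 9" shows "DI r * transpose_mat (nakayama_cartan (r+7) r) = 1\<^sub>m (r+7)"
proof (rule eq_matI)
  fix i j assume i: "i < dim_row (1\<^sub>m (r+7))" and j: "j < dim_col (1\<^sub>m (r+7))"
  have C: "transpose_mat (nakayama_cartan (r+7) r) \<in> carrier_mat (r+7) (r+7)" by (simp add: nakayama_cartan_def)
  have e: "(DI r * transpose_mat (nakayama_cartan (r+7) r)) $$ (i,j) =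
     (if j \<le> i \<and> i - j < r then 1 else 0) - (if 1 \<le> i then (if j \<le> i - 1 \<and> i - 1 - j < r then 1 else 0) else 0)
     + (if r \<le> i then (if j \<le> i - r \<and> i - r - j < r then 1 else 0) else 0) - (if r+1 \<le> i then (if j \<le> i-r-1 \<and> i-r-1-j < r then 1 else 0) else 0)"
  proof -
    have "i - 1 < r + 7" "i - r < r + 7" "i - r - 1 < r + 7" using i by auto
    then show ?thesis using i j by (subst DI_mult[OF C]) (simp_all add: nakayama_cartan_def)
  qed
  show "(DI r * transpose_mat (nakayama_cartan (r+7) r)) $$ (i,j) = 1\<^sub>m (r+7) $$ (i,j)"
  proof (cases "i < r")
    case True
    then show ?thesis unfolding e using i j r by (cases i) auto
  next
    case False
    then obtain t where t: "i = r + t" by (metis le_add_diff_inverse not_less)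
    show ?thesis unfolding e using i j r unfolding t by (cases t) auto
  qed
qed (auto simp: DI_def nakayama_cartan_def)



definition PhiM :: "nat \<Rightarrow> rat mat" where
  "PhiM r = mat (r+7) (r+7) (\<lambda>(i,j). if r - 1 \<le> j then (if i = j - (r - 1) then -1 else 0)
     else (if i = j + 1 then 1 else 0) - (if i = 0 then 1 else 0) - (if i = r then 1 else 0)
        + (if j \<le> 5 \<and> i = j + 1 + r then 1 else 0))"

lemma PhiM_carrier[simp]: "PhiM r \<in> carrier_mat (r+7) (r+7)" by (simp add: PhiM_def)

lemma DI_carrier[simp]: "DI r \<in> carrier_mat (r+7) (r+7)" by (simp add: DI_def)

lemma cartan_carrier[simp]: "nakayama_cartan n r \<in> carrier_mat n n" by (simp add: nakayama_cartan_def)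

lemma coxeter_PhiM: assumes r: "r \<ge> 9"
  shows "coxeter_matrix (nakayama_cartan (r+7) r) = PhiM r"
proof -
  let ?C = "nakayama_cartan (r+7) r"
  have CT: "transpose_mat ?C \<in> carrier_mat (r+7) (r+7)" by simp
  have l: "DI r * transpose_mat ?C = 1\<^sub>m (r+7)" by (rule DI_inv[OF r])
  have rr: "transpose_mat ?C * DI r = 1\<^sub>m (r+7)"
    by (rule mat_mult_left_right_inverse[OF DI_carrier CT l])
  have inv: "mat_inverse (transpose_mat ?C) = Some (DI r)"
  proof (cases "mat_inverse (transpose_mat ?C)")
    case None
    from mat_inverse(1)[OF CT None, of undefined] l rr show ?thesis
      by (auto simp: Units_def ring_mat_def)
  next
    case (Some B)
    from mat_inverse(2)[OF CT Some] have B: "B \<in> carrier_mat (r+7) (r+7)" and 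
      rB: "transpose_mat ?C * B = 1\<^sub>m (r+7)" by auto
    have "DI r = DI r * (transpose_mat ?C * B)" using rB by (simp add: right_mult_one_mat[OF DI_carrier])
    also have "\<dots> = (DI r * transpose_mat ?C) * B" using B by (simp add: assoc_mult_mat[of _ "r+7" "r+7" _ "r+7" _ "r+7"])
    also have "\<dots> = B" using l B by simp
    finally show ?thesis using Some by simp
  qed
  have e: "- (DI r * ?C) = PhiM r"
  proof (rule eq_matI)
    fix i j assume i: "i < dim_row (PhiM r)" and j: "j < dim_col (PhiM r)"
    hence i: "i < r + 7" and j: "j < r + 7" by (auto simp: PhiM_def)
    have "i - 1 < r + 7" "i - r < r + 7" "i - r - 1 < r + 7" using i by auto
    then have e0: "(DI r * ?C) $$ (i,j) = ((if i \<le> j \<and> j - i < r then 1 else 0) - (if 1 \<le> i then (if i - 1 \<le> j \<and> j - (i - 1) < r then 1 else 0) else 0)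
     + (if r \<le> i then (if i - r \<le> j \<and> j - (i - r) < r then 1 else 0) else 0) - (if r+1 \<le> i then (if i-r-1 \<le> j \<and> j - (i-r-1) < r then 1 else 0) else 0))"
      using i j by (subst DI_mult[OF cartan_carrier i j]) (simp_all add: nakayama_cartan_def)
    have e: "(- (DI r * ?C)) $$ (i,j) = - (DI r * ?C) $$ (i,j)" using i j by (simp add: DI_def nakayama_cartan_def)
    show "(- (DI r * ?C)) $$ (i,j) = PhiM r $$ (i,j)"
    proof (cases "i < r")
      case True
      then show ?thesis unfolding e e0 using i j r by (cases i) (auto simp: PhiM_def)
    next
      case False
      then obtain t where t: "i = r + t" by (metis le_add_diff_inverse not_less)
      show ?thesis unfolding e e0 using i j r unfolding t by (cases t) (auto simp: PhiM_def)
    qed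
  qed (auto simp: PhiM_def nakayama_cartan_def DI_def)
  show ?thesis unfolding coxeter_matrix_def inv e[symmetric] by simp
qed



definition cmat :: "nat \<Rightarrow> (nat \<Rightarrow> (nat \<times> rat) list) \<Rightarrow> rat mat" where
  "cmat n f = mat n n (\<lambda>(i,k). sum_list (map (\<lambda>(a,c). if i = a then c else 0) (f k)))"

lemma cmat_carrier[simp]: "cmat n f \<in> carrier_mat n n" by (simp add: cmat_def)
lemma cmat_dims[simp]: "dim_row (cmat n f) = n" "dim_col (cmat n f) = n" by (simp_all add: cmat_def)

lemma sum_list_delta:
  fixes g :: "nat \<Rightarrow> rat"
  shows "(\<Sum>m\<in>{0..<n}. g m * sum_list (map (\<lambda>(a,c). if m = a then c else 0) l)) = sum_list (map (\<lambda>(a,c). if a < n then c * g a else 0) l)"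
proof (induction l)
  case Nil
  then show ?case by simp
next
  case (Cons p l)
  obtain a c where p: "p = (a,c)" by (cases p)
  have "(\<Sum>m\<in>{0..<n}. g m * sum_list (map (\<lambda>(a,c). if m = a then c else 0) (p # l)))
     = (\<Sum>m\<in>{0..<n}. (if True \<and> m = a then c else 0) * g m) + (\<Sum>m\<in>{0..<n}. g m * sum_list (map (\<lambda>(a,c). if m = a then c else 0) l))"
    unfolding p by (simp add: sum.distrib algebra_simps)
  also have "\<dots> = (if a < n then c * g a else 0) + sum_list (map (\<lambda>(a,c). if a < n then c * g a else 0) l)"
    unfolding sum_delta_mult using Cons by auto
  finally show ?case using p by simp
qed

lemma mult_cmat:
  assumes A: "A \<in> carrier_mat n n" and i: "i < n" and k: "k < n"
  shows "(A * cmat n f) $$ (i,k) = sum_list (map (\<lambda>(a,c). if a < n then c * A $$ (i,a) else 0) (f k))"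
proof -
  have "(A * cmat n f) $$ (i,k) = (\<Sum>m\<in>{0..<n}. A $$ (i,m) * sum_list (map (\<lambda>(a,c). if m = a then c else 0) (f k)))"
    using A i k by (simp add: scalar_prod_def cmat_def)
  also have "\<dots> = sum_list (map (\<lambda>(a,c). if a < n then c * A $$ (i,a) else 0) (f k))"
    by (rule sum_list_delta)
  finally show ?thesis .
qed

lemma cmat_index: "i < n \<Longrightarrow> k < n \<Longrightarrow> cmat n f $$ (i,k) = sum_list (map (\<lambda>(a,c). if i = a then c else 0) (f k))"
  by (simp add: cmat_def)

definition pcol :: "nat \<Rightarrow> nat \<Rightarrow> (nat \<times> rat) list" where
  "pcol r k =
   (if k < r - 6 then [(k+7, 1), (k+6, -1)]
    else if k = r-6 then [(0,1),(1,-1)]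
    else if k = r-5 then [(1,1),(2,-1),(r+1,1),(r+2,-1)]
    else if k = r-4 then [(r+2,1),(r+3,-1)]
    else if k = r-3 then [(4,1),(3,-1)]
    else if k = r-2 then [(5,1),(4,-1),(r+5,1),(r+4,-1)]
    else if k = r-1 then [(r+6,1),(r+5,-1)]
    else if k = r then [(0,1),(r,1)]
    else if k = r+1 then [(0,-1),(r,-1),(r+1,1)]
    else if k = r+2 then [(0,1),(r,1),(r+1,-1),(2,-1)]
    else if k = r+3 then [(r+1,1),(2,1),(3,-1),(r+3,-1)]
    else if k = r+4 then [(2,-1),(3,1),(r+3,1),(r+4,-1)]
    else if k = r+5 then [(3,-1),(r+3,-1),(r+4,1),(5,1)]
    else [(r+4,-1),(5,-1),(6,1),(r+6,1)])"

definition dcol :: "nat \<Rightarrow> nat \<Rightarrow> (nat \<times> rat) list" where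
  "dcol r k =
   (if k < r - 1 then [(k+1,1)]
    else if k = r - 1 then [(0,-1)]
    else if k < r + 6 then [(k+1,1)]
    else [(r,-1),(r+1,-1),(r+3,1),(r+4,1),(r+6,-1)])"

definition PP :: "nat \<Rightarrow> rat mat" where "PP r = cmat (r+7) (pcol r)"
definition DD :: "nat \<Rightarrow> rat mat" where "DD r = cmat (r+7) (dcol r)"

lemma PhiM_idx: "i < r + 7 \<Longrightarrow> j < r + 7 \<Longrightarrow> PhiM r $$ (i,j) = (if r - 1 \<le> j then (if i = j - (r - 1) then -1 else 0)
     else (if i = j + 1 then 1 else 0) - (if i = 0 then 1 else 0) - (if i = r then 1 else 0)
        + (if j \<le> 5 \<and> i = j + 1 + r then 1 else 0))"
  by (simp add: PhiM_def)

lemma PhiP_PD: assumes r: "r \<ge> 9" shows "PhiM r * PP r = PP r * DD r"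
proof (rule eq_matI)
  fix i k assume i: "i < dim_row (PP r * DD r)" and k: "k < dim_col (PP r * DD r)"
  hence i: "i < r + 7" and k: "k < r + 7" by (auto simp: PP_def DD_def)
  have L: "(PhiM r * PP r) $$ (i,k) = sum_list (map (\<lambda>(a,c). if a < r + 7 then c * PhiM r $$ (i,a) else 0) (pcol r k))"
    unfolding PP_def by (rule mult_cmat[of "PhiM r" "r+7" i k "pcol r", OF PhiM_carrier i k])
  have R: "(PP r * DD r) $$ (i,k) = sum_list (map (\<lambda>(a,c). if a < r + 7 then c * PP r $$ (i,a) else 0) (dcol r k))"
    unfolding DD_def by (rule mult_cmat[of "PP r" "r+7" i k "dcol r", OF _ i k], simp add: PP_def)
  show "(PhiM r * PP r) $$ (i,k) = (PP r * DD r) $$ (i,k)"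
    unfolding L R
  proof (cases "k < r - 8")
    case True
    show "sum_list (map (\<lambda>(a,c). if a < r + 7 then c * PhiM r $$ (i,a) else 0) (pcol r k)) = sum_list (map (\<lambda>(a,c). if a < r + 7 then c * PP r $$ (i,a) else 0) (dcol r k))"
    proof -
      have c: "k < r - 6" "k + 1 < r - 6" "k < r - 1" using True by auto
      have p: "pcol r k = [(k+7, 1), (k+6, -1)]" using c by (simp add: pcol_def)
      have p1: "pcol r (Suc k) = [(k+8, 1), (k+7, -1)]" using c by (simp add: pcol_def)
      have d: "dcol r k = [(k+1, 1)]" using c by (simp add: dcol_def)
      have k7: "k + 7 < r + 7" "k + 6 < r + 7" "k + 1 < r + 7" "\<not> r - 1 \<le> k + 7" "\<not> r - 1 \<le> k + 6" using True r by auto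
      have "PP r $$ (i, k+1) = (if i = k + 8 then 1 else 0) - (if i = k + 7 then 1 else 0)"
        unfolding PP_def using i k7 by (simp add: cmat_index p1)
      moreover have "PhiM r $$ (i,k+7) = (if i = k + 8 then 1 else 0) - (if i = 0 then 1 else 0) - (if i = r then 1 else 0)"
        using i k7 by (simp add: PhiM_idx)
      moreover have "PhiM r $$ (i,k+6) = (if i = k + 7 then 1 else 0) - (if i = 0 then 1 else 0) - (if i = r then 1 else 0)"
        using i k7 by (simp add: PhiM_idx)
      ultimately show ?thesis unfolding p d using k7 by simp
    qed
  next
    case False
    define s where "s = k - (r - 8)"
    have s: "k = r - 8 + s" and s14: "s < 15" using k r False unfolding s_def by arith+
    have "s = 0 \<or> s = 1 \<or> s = 2 \<or> s = 3 \<or> s = 4 \<or> s = 5 \<or> s = 6 \<or> s = 7 \<or> s = 8 \<or> s = 9 \<or> s = 10 \<or> s = 11 \<or> s = 12 \<or> s = 13 \<or> s = 14"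
      using s14 by arith
    then show "sum_list (map (\<lambda>(a,c). if a < r + 7 then c * PhiM r $$ (i,a) else 0) (pcol r k)) = sum_list (map (\<lambda>(a,c). if a < r + 7 then c * PP r $$ (i,a) else 0) (dcol r k))"
    proof -
      obtain m where m: "r = m + 9" using r by (metis add.commute le_Suc_ex)
      have k': "k = m + 1 + s" unfolding s m by simp
      have i': "i < m + 16" using i m by simp
      note defs = pcol_def dcol_def PhiM_idx PP_def cmat_index
      show ?thesis using `s = 0 \<or> _` i' unfolding k' m
        apply (elim disjE)
        apply (simp_all add: defs)
        done
    qed
  qed
qed (auto simp: PP_def DD_def PhiM_def)



lemma transpose_cmat_vec:
  assumes v: "v \<in> carrier_vec n" and k: "k < n"
  shows "(transpose_mat (cmat n f) *\<^sub>v v) $ k = sum_list (map (\<lambda>(a,c). if a < n then c * v $ a else 0) (f k))"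
proof -
  have "(transpose_mat (cmat n f) *\<^sub>v v) $ k = (\<Sum>m\<in>{0..<n}. (\<lambda>m. v $ m) m * sum_list (map (\<lambda>(a,c). if m = a then c else 0) (f k)))"
    using v k by (simp add: scalar_prod_def cmat_def mult.commute)
  also have "\<dots> = sum_list (map (\<lambda>(a,c). if a < n then c * v $ a else 0) (f k))"
    by (rule sum_list_delta)
  finally show ?thesis .
qed

lemma PP_inj:
  assumes r: "r \<ge> 9" and v: "v \<in> carrier_vec (r+7)" and z: "transpose_mat (PP r) *\<^sub>v v = 0\<^sub>v (r+7)"
  shows "v = 0\<^sub>v (r+7)"
proof -
  obtain m where m: "r = m + 9" using r by (metis add.commute le_Suc_ex)
  have eq: "sum_list (map (\<lambda>(a,c). if a < r+7 then c * v $ a else 0) (pcol r k)) = 0" if k: "k < r + 7" for k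
  proof -
    have "(transpose_mat (PP r) *\<^sub>v v) $ k = 0" using z k by simp
    then show ?thesis unfolding PP_def using transpose_cmat_vec[OF v k] by simp
  qed
  have chain: "v $ (k+7) = v $ (k+6)" if k: "k < m + 3" for k
  proof -
    have "k < r - 6" using k m by simp
    then have "pcol r k = [(k+7, 1), (k+6, -1)]" by (simp add: pcol_def)
    then show ?thesis using eq[of k] k m by simp
  qed
  have ch: "v $ (6 + j) = v $ 6" if "j \<le> m + 3" for j
    using that
  proof (induction j)
    case 0 then show ?case by simp
  next
    case (Suc j)
    then show ?case using chain[of j] by (simp add: add.commute)
  qed
  note e = eq[unfolded m]
  have e0: "v $ 0 - v $ 1 = 0" using e[of "m+3"] by (simp add: pcol_def algebra_simps)
  have e1: "v $ 1 - v $ 2 + v $ (m + 10) - v $ (m+11) = 0" using e[of "m+4"] by (simp add: pcol_def algebra_simps)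
  have e2: "v $ (m+11) - v $ (m+12) = 0" using e[of "m+5"] by (simp add: pcol_def algebra_simps)
  have e3: "v $ 4 - v $ 3 = 0" using e[of "m+6"] by (simp add: pcol_def algebra_simps)
  have e4: "v $ 5 - v $ 4 + v $ (m+14) - v $ (m+13) = 0" using e[of "m+7"] by (simp add: pcol_def algebra_simps)
  have e5: "v $ (m+15) - v $ (m+14) = 0" using e[of "m+8"] by (simp add: pcol_def algebra_simps)
  have e6: "v $ 0 + v $ (m+9) = 0" using e[of "m+9"] by (simp add: pcol_def algebra_simps)
  have e7: "- v $ 0 - v $ (m+9) + v $ (m+10) = 0" using e[of "m+10"] by (simp add: pcol_def algebra_simps)
  have e8: "v $ 0 + v $ (m+9) - v $ (m+10) - v $ 2 = 0" using e[of "m+11"] by (simp add: pcol_def algebra_simps)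
  have e9: "v $ (m+10) + v $ 2 - v $ 3 - v $ (m+12) = 0" using e[of "m+12"] by (simp add: pcol_def algebra_simps)
  have e10: "- v $ 2 + v $ 3 + v $ (m+12) - v $ (m+13) = 0" using e[of "m+13"] by (simp add: pcol_def algebra_simps)
  have e11: "- v $ 3 - v $ (m+12) + v $ (m+13) + v $ 5 = 0" using e[of "m+14"] by (simp add: pcol_def algebra_simps)
  have e12: "- v $ (m+13) - v $ 5 + v $ 6 + v $ (m+15) = 0" using e[of "m+15"] by (simp add: pcol_def algebra_simps)
  have c: "v $ (m + 9) = v $ 6" using ch[of "m+3"] by (simp add: add.commute)
  have zero6: "v $ 6 = 0" using e0 e1 e2 e3 e4 e5 e6 e7 e8 e9 e10 e11 e12 c by linarith
  have vals: "v $ 0 = 0" "v $ 1 = 0" "v $ 2 = 0" "v $ 3 = 0" "v $ 4 = 0" "v $ 5 = 0"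
    "v $ (m+9) = 0" "v $ (m+10) = 0" "v $ (m+11) = 0" "v $ (m+12) = 0" "v $ (m+13) = 0" "v $ (m+14) = 0" "v $ (m+15) = 0"
    using e0 e1 e2 e3 e4 e5 e6 e7 e8 e9 e10 e11 e12 c zero6 by linarith+
  show ?thesis
  proof (rule eq_vecI)
    fix i assume i: "i < dim_vec (0\<^sub>v (r+7))"
    hence i: "i < m + 16" using m by simp
    have "v $ i = 0"
    proof (cases "6 \<le> i \<and> i \<le> m + 9")
      case True
      define j where "j = i - 6"
      have j: "i = 6 + j" "j \<le> m + 3" using True unfolding j_def by arith+
      then show ?thesis using ch[of j] zero6 by simp
    next
      case False
      then have "i \<in> {0,1,2,3,4,5,m+10,m+11,m+12,m+13,m+14,m+15}" using i by auto
      then show ?thesis using vals by auto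
    qed
    then show "v $ i = 0\<^sub>v (r+7) $ i" using i m by simp
  qed (use v in auto)
qed

lemma PP_det: assumes r: "r \<ge> 9" shows "det (PP r) \<noteq> 0"
proof
  assume "det (PP r) = 0"
  then have "det (transpose_mat (PP r)) = 0" using det_transpose[of "PP r" "r+7"] by (simp add: PP_def)
  then obtain v where v: "v \<in> carrier_vec (r+7)" "v \<noteq> 0\<^sub>v (r+7)" "transpose_mat (PP r) *\<^sub>v v = 0\<^sub>v (r+7)"
    using det_0_iff_vec_prod_zero_field[of "transpose_mat (PP r)" "r+7"] by (auto simp: PP_def)
  then show False using PP_inj[OF r] by blast
qed



definition compm :: "nat \<Rightarrow> (nat \<Rightarrow> rat) \<Rightarrow> rat mat" where
  "compm m c = mat m m (\<lambda>(i,j). (if j = m - 1 then - c i else 0) + (if i = Suc j then 1 else 0))"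

lemma compm_carrier[simp]: "compm m c \<in> carrier_mat m m" by (simp add: compm_def)
lemma compm_dims[simp]: "dim_row (compm m c) = m" "dim_col (compm m c) = m" by (simp_all add: compm_def)

lemma cpm_compm_idx: "i < m \<Longrightarrow> j < m \<Longrightarrow> char_poly_matrix (compm m c) $$ (i,j) =
   (if i = j then [:0,1:] else 0) + (if j = m - 1 then [:c i:] else 0) - (if i = Suc j then 1 else 0)"
  by (auto simp: char_poly_matrix_def compm_def one_pCons)

lemma X_monom: "[:0,1:] * monom (a::rat) i = monom a (Suc i)"
  by (simp add: poly_eq_iff coeff_monom coeff_pCons split: nat.splits)

lemma sum_two_delta:
  fixes f :: "nat \<Rightarrow> 'a :: comm_ring_1"
  shows "(\<Sum>j<n. ((if j = a then x else 0) + (if j = b then y else 0)) * f j) = (if a < n then x * f a else 0) + (if b < n then y * f b else 0)"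
proof -
  have "(\<Sum>j<n. ((if j = a then x else 0) + (if j = b then y else 0)) * f j) = (\<Sum>j<n. (if j = a then x * f a else 0)) + (\<Sum>j<n. (if j = b then y * f b else 0))"
    by (simp add: distrib_right sum.distrib if_distrib[of "\<lambda>u. u * f _"] cong: if_cong)
  also have "\<dots> = (if a < n then x * f a else 0) + (if b < n then y * f b else 0)"
    by (simp add: sum.delta)
  finally show ?thesis .
qed

lemma mat_delete_idx0: "A \<in> carrier_mat (Suc m) (Suc m) \<Longrightarrow> a < m \<Longrightarrow> b < m \<Longrightarrow>
  mat_delete A 0 j $$ (a,b) = A $$ (Suc a, if b < j then b else Suc b)"
  by (simp add: mat_delete_def)

lemma char_poly_comp: "char_poly (compm m c) = monom 1 m + (\<Sum>i<m. monom (c i) i)"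
proof (induction m arbitrary: c)
  case 0
  have "char_poly (compm 0 c) = 1" unfolding char_poly_def
    by (rule det_dim_zero, simp add: char_poly_matrix_def compm_def)
  then show ?case by simp
next
  case (Suc m)
  let ?M = "char_poly_matrix (compm (Suc m) c)"
  have M: "?M \<in> carrier_mat (Suc m) (Suc m)" by simp
  have lap: "det ?M = (\<Sum>j<Suc m. ?M $$ (0,j) * cofactor ?M 0 j)"
    by (rule laplace_expansion_row[OF M], simp)
  show ?case
  proof (cases "m = 0")
    case True
    have d1: "det ?M = ?M $$ (0,0) * cofactor ?M 0 0" unfolding lap unfolding True by (simp only: sum.lessThan_Suc lessThan_0 sum.empty add_0_left)
    have d2: "cofactor ?M 0 0 = 1"
    proof -
      have "mat_delete ?M 0 0 \<in> carrier_mat m m" using mat_delete_carrier[OF M] by simp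
      then show ?thesis unfolding cofactor_def True by simp
    qed
    have "?M $$ (0,0) = (if 0 = (0::nat) then [:0,1:] else 0) + (if 0 = Suc m - 1 then [:c 0:] else 0) - (if 0 = Suc 0 then 1 else 0)"
      by (rule cpm_compm_idx) simp_all
    then have d3: "?M $$ (0,0) = [:0,1:] + [:c 0:]" using True by simp
    have d4: "monom 1 (Suc m) + (\<Sum>i<Suc m. monom (c i) i) = [:0,1:] + [:c 0:]"
      using True by (simp add: monom_0 X_monom[of 1 0, symmetric])
    show ?thesis unfolding char_poly_def d4 d1 d2 d3 by simp
  next
    case False
    have del0: "mat_delete ?M 0 0 = char_poly_matrix (compm m (\<lambda>i. c (Suc i)))"
    proof (rule eq_matI)
      fix a b assume a: "a < dim_row (char_poly_matrix (compm m (\<lambda>i. c (Suc i))))"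
        and b: "b < dim_col (char_poly_matrix (compm m (\<lambda>i. c (Suc i))))"
      hence a: "a < m" and b: "b < m" by (auto simp: char_poly_matrix_def)
      have "mat_delete ?M 0 0 $$ (a,b) = ?M $$ (Suc a, Suc b)" using mat_delete_idx0[OF M a b] by simp
      also have "\<dots> = (if Suc a = Suc b then [:0,1:] else 0) + (if Suc b = Suc m - 1 then [:c (Suc a):] else 0) - (if Suc a = Suc (Suc b) then 1 else 0)"
        by (rule cpm_compm_idx) (use a b in simp_all)
      also have "\<dots> = (if a = b then [:0,1:] else 0) + (if b = m - 1 then [:c (Suc a):] else 0) - (if a = Suc b then 1 else 0)"
        using False by auto
      also have "\<dots> = char_poly_matrix (compm m (\<lambda>i. c (Suc i))) $$ (a,b)"
        by (rule cpm_compm_idx[symmetric]) (use a b in simp_all)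
      finally show "mat_delete ?M 0 0 $$ (a,b) = char_poly_matrix (compm m (\<lambda>i. c (Suc i))) $$ (a,b)" .
    qed (use mat_delete_carrier[OF M] in \<open>auto simp: char_poly_matrix_def\<close>)
    have dm_idx: "mat_delete ?M 0 m $$ (a,b) = (if b = Suc a then [:0,1:] else 0) - (if a = b then 1 else 0)"
      if a: "a < m" and b: "b < m" for a b
    proof -
      have "mat_delete ?M 0 m $$ (a,b) = ?M $$ (Suc a, b)" using mat_delete_idx0[OF M a b] b by simp
      also have "\<dots> = (if Suc a = b then [:0,1:] else 0) + (if b = Suc m - 1 then [:c (Suc a):] else 0) - (if Suc a = Suc b then 1 else 0)"
        by (rule cpm_compm_idx) (use a b in simp_all)
      also have "\<dots> = (if b = Suc a then [:0,1:] else 0) - (if a = b then 1 else 0)"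
        using b by auto
      finally show ?thesis .
    qed
    have dmc: "mat_delete ?M 0 m \<in> carrier_mat m m" using mat_delete_carrier[OF M] by simp
    have up: "upper_triangular (mat_delete ?M 0 m)"
      unfolding upper_triangular_def using dmc dm_idx by auto
    have "det (mat_delete ?M 0 m) = prod_list (diag_mat (mat_delete ?M 0 m))"
      by (rule det_upper_triangular[OF up dmc])
    also have "\<dots> = (\<Prod>a = 0..<m. (-1))" unfolding prod_list_diag_prod
      using dmc dm_idx by (intro prod.cong) auto
    also have "\<dots> = (-1)^m" by simp
    finally have dm: "det (mat_delete ?M 0 m) = (-1)^m" .
    have cm: "cofactor ?M 0 m = 1" unfolding cofactor_def dm
      by (simp flip: power_add add: power_even_eq)
    have c0: "cofactor ?M 0 0 = char_poly (compm m (\<lambda>i. c (Suc i)))"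
      unfolding cofactor_def del0 char_poly_def by simp
    have row: "?M $$ (0,j) = (if j = 0 then [:0,1:] else 0) + (if j = m then [:c 0:] else 0)" if j: "j < Suc m" for j
    proof -
      have "?M $$ (0,j) = (if 0 = j then [:0,1:] else 0) + (if j = Suc m - 1 then [:c 0:] else 0) - (if 0 = Suc j then 1 else 0)"
        by (rule cpm_compm_idx) (use j in simp_all)
      then show ?thesis by auto
    qed
    have "det ?M = (\<Sum>j<Suc m. ((if j = 0 then [:0,1:] else 0) + (if j = m then [:c 0:] else 0)) * cofactor ?M 0 j)"
      unfolding lap by (rule sum.cong[OF refl], simp add: row)
    also have "\<dots> = [:0,1:] * cofactor ?M 0 0 + [:c 0:] * cofactor ?M 0 m"
      by (subst sum_two_delta) simp
    also have "\<dots> = [:0,1:] * (monom 1 m + (\<Sum>i<m. monom (c (Suc i)) i)) + [:c 0:]"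
      unfolding c0 Suc.IH cm by simp
    also have "\<dots> = monom 1 (Suc m) + (\<Sum>i<m. monom (c (Suc i)) (Suc i)) + monom (c 0) 0"
      by (simp only: distrib_left sum_distrib_left X_monom monom_0)
    also have "\<dots> = monom 1 (Suc m) + (\<Sum>i<Suc m. monom (c i) i)"
      unfolding sum.lessThan_Suc_shift by (simp only: ac_simps)
    finally show ?thesis unfolding char_poly_def .
  qed
qed



definition c1 :: "nat \<Rightarrow> rat" where "c1 i = (if i = 0 then 1 else 0)"
definition c2 :: "nat \<Rightarrow> rat" where
  "c2 i = (if i = 0 then 1 else if i = 1 then 1 else if i = 3 then -1 else if i = 4 then -1 else if i = 6 then 1 else 0)"

lemma DD_block: assumes r: "r \<ge> 9"
  shows "DD r = four_block_mat (compm r c1) (0\<^sub>m r 7) (0\<^sub>m 7 r) (compm 7 c2)"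
proof (rule eq_matI)
  obtain m where m: "r = m + 9" using r by (metis add.commute le_Suc_ex)
  fix i k assume i: "i < dim_row (four_block_mat (compm r c1) (0\<^sub>m r 7) (0\<^sub>m 7 r) (compm 7 c2))"
    and k: "k < dim_col (four_block_mat (compm r c1) (0\<^sub>m r 7) (0\<^sub>m 7 r) (compm 7 c2))"
  hence i: "i < m + 16" and k: "k < m + 16" using m by auto
  have fb: "four_block_mat (compm r c1) (0\<^sub>m r 7) (0\<^sub>m 7 r) (compm 7 c2) $$ (i,k) =
    (if i < m + 9 then if k < m + 9 then compm r c1 $$ (i,k) else 0
     else if k < m + 9 then 0 else compm 7 c2 $$ (i - (m+9), k - (m+9)))"
    using i k m by simp
  have dd: "DD r $$ (i,k) = sum_list (map (\<lambda>(a,c). if i = a then c else 0) (dcol r k))"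
    unfolding DD_def using i k m by (simp add: cmat_index)
  show "DD r $$ (i,k) = four_block_mat (compm r c1) (0\<^sub>m r 7) (0\<^sub>m 7 r) (compm 7 c2) $$ (i,k)"
    unfolding fb dd
  proof (cases "k < m + 8")
    case True
    then show "sum_list (map (\<lambda>(a,c). if i = a then c else 0) (dcol r k)) =
    (if i < m + 9 then if k < m + 9 then compm r c1 $$ (i,k) else 0
     else if k < m + 9 then 0 else compm 7 c2 $$ (i - (m+9), k - (m+9)))"
      using i m by (simp add: dcol_def compm_def c1_def)
  next
    case False
    define s where "s = k - (m + 8)"
    have s: "k = m + 8 + s" and s8: "s < 8" using k False unfolding s_def by arith+
    have "s = 0 \<or> s = 1 \<or> s = 2 \<or> s = 3 \<or> s = 4 \<or> s = 5 \<or> s = 6 \<or> s = 7" using s8 by arith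
    then show "sum_list (map (\<lambda>(a,c). if i = a then c else 0) (dcol r k)) =
    (if i < m + 9 then if k < m + 9 then compm r c1 $$ (i,k) else 0
     else if k < m + 9 then 0 else compm 7 c2 $$ (i - (m+9), k - (m+9)))"
      unfolding s m using i by (elim disjE) (auto simp: dcol_def compm_def c1_def c2_def)
  qed
qed (auto simp: DD_def)

lemma char_poly_block:
  fixes A B :: "rat mat"
  assumes A: "A \<in> carrier_mat n n" and B: "B \<in> carrier_mat k k"
  shows "char_poly (four_block_mat A (0\<^sub>m n k) (0\<^sub>m k n) B) = char_poly A * char_poly B"
proof -
  let ?cm = "\<lambda> A. [:0, 1:] \<cdot>\<^sub>m 1\<^sub>m (dim_row A) + map_mat (\<lambda>a. [:- a:]) A"
  have "char_poly (four_block_mat A (0\<^sub>m n k) (0\<^sub>m k n) B) = det (?cm (four_block_mat A (0\<^sub>m n k) (0\<^sub>m k n) B))"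
    unfolding char_poly_defs by simp
  also have "?cm (four_block_mat A (0\<^sub>m n k) (0\<^sub>m k n) B) = four_block_mat (?cm A) (0\<^sub>m n k) (0\<^sub>m k n) (?cm B)"
    by (rule eq_matI, insert A B, auto)
  also have "det \<dots> = det (?cm A) * det (?cm B)"
    by (rule det_four_block_mat_upper_right_zero[where n=n and m=k], insert A B, auto)
  also have "\<dots> = char_poly A * char_poly B" unfolding char_poly_defs ..
  finally show ?thesis .
qed



lemma PP_carrier[simp]: "PP r \<in> carrier_mat (r+7) (r+7)" by (simp add: PP_def)
lemma DD_carrier[simp]: "DD r \<in> carrier_mat (r+7) (r+7)" by (simp add: DD_def)

lemma dims_PP[simp]: "dim_row (PP r) = r+7" "dim_col (PP r) = r+7" "dim_row (DD r) = r+7" "dim_col (DD r) = r+7"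
  "dim_row (PhiM r) = r+7" "dim_col (PhiM r) = r+7"
  by (simp_all add: PP_def DD_def PhiM_def)

lemma PP_inverse: assumes r: "r \<ge> 9"
  obtains Q where "Q \<in> carrier_mat (r+7) (r+7)" "PP r * Q = 1\<^sub>m (r+7)" "Q * PP r = 1\<^sub>m (r+7)"
proof -
  have "PP r \<in> Units (ring_mat TYPE(rat) (r+7) undefined)"
    by (rule det_non_zero_imp_unit[OF PP_carrier PP_det[OF r]])
  then obtain Q where "Q \<in> carrier_mat (r+7) (r+7)" "Q * PP r = 1\<^sub>m (r+7)" "PP r * Q = 1\<^sub>m (r+7)"
    by (auto simp: Units_def ring_mat_def)
  then show ?thesis using that by blast
qed

lemma PhiM_wit: assumes r: "r \<ge> 9"
  obtains Q where "similar_mat_wit (PhiM r) (DD r) (PP r) Q"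
proof -
  obtain Q where Q: "Q \<in> carrier_mat (r+7) (r+7)" and PQ: "PP r * Q = 1\<^sub>m (r+7)" and QP: "Q * PP r = 1\<^sub>m (r+7)"
    using PP_inverse[OF r] by blast
  have "PhiM r = PhiM r * (PP r * Q)" using PQ by (simp add: right_mult_one_mat[OF PhiM_carrier])
  also have "\<dots> = (PhiM r * PP r) * Q" using Q by (simp add: assoc_mult_mat[of _ "r+7" "r+7" _ "r+7" _ "r+7"])
  also have "\<dots> = PP r * DD r * Q" using PhiP_PD[OF r] by simp
  finally have e: "PhiM r = PP r * DD r * Q" .
  have "similar_mat_wit (PhiM r) (DD r) (PP r) Q"
  proof -
    have c: "{PhiM r, DD r, PP r, Q} \<subseteq> carrier_mat (r+7) (r+7)" using Q by auto
    show ?thesis unfolding similar_mat_wit_def Let_def dims_PP using c PQ QP e by blast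
  qed
  then show ?thesis using that by blast
qed

lemma char_poly_PhiM: assumes r: "r \<ge> 9"
  shows "char_poly (PhiM r) = [:1, 1:] * (monom 1 6 - monom 1 3 + 1) * (monom 1 r + 1)"
proof -
  obtain Q where w: "similar_mat_wit (PhiM r) (DD r) (PP r) Q" using PhiM_wit[OF r] by blast
  have "char_poly (PhiM r) = char_poly (DD r)"
    by (rule char_poly_similar, unfold similar_mat_def, use w in blast)
  also have "\<dots> = char_poly (compm r c1) * char_poly (compm 7 c2)"
    unfolding DD_block[OF r] by (rule char_poly_block) auto
  also have "char_poly (compm r c1) = monom 1 r + 1"
  proof -
    have "(\<Sum>i<r. monom (c1 i) i) = 1" using r unfolding c1_def
      by (simp add: monom_0 sum.delta' if_distrib[of "\<lambda>x. monom x _"] cong: if_cong)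
    then show ?thesis unfolding char_poly_comp by simp
  qed
  also have "char_poly (compm 7 c2) = [:1, 1:] * (monom 1 6 - monom 1 3 + 1)"
    unfolding char_poly_comp c2_def by (simp add: monom_altdef numeral_eq_Suc lessThan_Suc one_pCons)
  finally show ?thesis by (simp add: ac_simps)
qed



lemma mat_unit_idx: fixes A :: "rat mat" assumes "A \<in> carrier_mat n n" "i < n" "j < n" shows "(A *\<^sub>v unit_vec n j) $ i = A $$ (i,j)"
proof -
  have "(A *\<^sub>v unit_vec n j) $ i = row A i \<bullet> unit_vec n j" using assms by simp
  also have "\<dots> = row A i $ j" by (rule scalar_prod_right_unit) (use assms in simp)
  also have "\<dots> = A $$ (i,j)" using assms by simp
  finally show ?thesis .
qed

lemma pow_mat_Suc_left: assumes A: "A \<in> carrier_mat n n"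
  shows "A ^\<^sub>m Suc k = A * A ^\<^sub>m k"
proof (induction k)
  case 0 then show ?case using A by simp
next
  case (Suc k)
  have "A ^\<^sub>m Suc (Suc k) = (A * A ^\<^sub>m k) * A" using Suc by simp
  also have "\<dots> = A * (A ^\<^sub>m k * A)" using A by (simp add: assoc_mult_mat[of _ n n _ n _ n])
  finally show ?case by simp
qed

lemma pow_mat_add: assumes A: "A \<in> carrier_mat n n"
  shows "A ^\<^sub>m (a + b) = A ^\<^sub>m a * A ^\<^sub>m b"
proof (induction b)
  case 0 then show ?case using A by simp
next
  case (Suc b)
  have "A ^\<^sub>m (a + Suc b) = (A ^\<^sub>m a * A ^\<^sub>m b) * A" using Suc by simp
  also have "\<dots> = A ^\<^sub>m a * (A ^\<^sub>m b * A)" using A by (simp add: assoc_mult_mat[of _ n n _ n _ n])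
  finally show ?case by simp
qed

lemma pow_mat_comm: assumes A: "A \<in> carrier_mat n n"
  shows "A ^\<^sub>m a * A ^\<^sub>m b = A ^\<^sub>m b * A ^\<^sub>m a"
  using pow_mat_add[OF A, of a b] pow_mat_add[OF A, of b a] by (simp add: add.commute)

lemma compm_mult_vec: assumes v: "v \<in> carrier_vec m" and i: "i < m"
  shows "(compm m c *\<^sub>v v) $ i = (if i = 0 then 0 else v $ (i - 1)) - c i * v $ (m - 1)"
proof -
  have "(compm m c *\<^sub>v v) $ i = (\<Sum>j<m. ((if j = m - 1 then - c i else 0) + (if j = i - 1 \<and> i > 0 then 1 else 0)) * v $ j)"
    using v i by (auto simp: compm_def scalar_prod_def atLeast0LessThan intro!: sum.cong)
  also have "\<dots> = (\<Sum>j<m. ((if j = m - 1 then - c i else 0) + (if j = i - 1 then (if i > 0 then 1 else 0) else 0)) * v $ j)"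
    by (rule sum.cong) auto
  also have "\<dots> = (if m - 1 < m then - c i * v $ (m - 1) else 0) + (if i - 1 < m then (if i > 0 then 1 else 0) * v $ (i - 1) else 0)"
    by (rule sum_two_delta)
  finally show ?thesis using i by auto
qed

lemma compm_pow_e0: assumes j: "j < m"
  shows "compm m c ^\<^sub>m j *\<^sub>v unit_vec m 0 = unit_vec m j"
  using j
proof (induction j)
  case 0 then show ?case by simp
next
  case (Suc j)
  have p: "compm m c ^\<^sub>m Suc j = compm m c * compm m c ^\<^sub>m j" by (rule pow_mat_Suc_left[OF compm_carrier])
  have "compm m c ^\<^sub>m Suc j *\<^sub>v unit_vec m 0 = compm m c *\<^sub>v (compm m c ^\<^sub>m j *\<^sub>v unit_vec m 0)"
    unfolding p by (rule assoc_mult_mat_vec) auto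
  also have "\<dots> = compm m c *\<^sub>v unit_vec m j" using Suc by simp
  also have "\<dots> = unit_vec m (Suc j)"
  proof (rule eq_vecI)
    fix i assume "i < dim_vec (unit_vec m (Suc j))"
    then have i: "i < m" by simp
    show "(compm m c *\<^sub>v unit_vec m j) $ i = unit_vec m (Suc j) $ i"
      using compm_mult_vec[OF unit_vec_carrier i] i Suc.prems by auto
  qed simp
  finally show ?case .
qed

lemma compm_pow_one_iff: assumes m: "0 < m"
  shows "compm m c ^\<^sub>m k = 1\<^sub>m m \<longleftrightarrow> compm m c ^\<^sub>m k *\<^sub>v unit_vec m 0 = unit_vec m 0"
proof
  assume "compm m c ^\<^sub>m k = 1\<^sub>m m" then show "compm m c ^\<^sub>m k *\<^sub>v unit_vec m 0 = unit_vec m 0" by simp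
next
  assume h: "compm m c ^\<^sub>m k *\<^sub>v unit_vec m 0 = unit_vec m 0"
  let ?M = "compm m c"
  have C: "?M \<in> carrier_mat m m" by simp
  have col: "?M ^\<^sub>m k *\<^sub>v unit_vec m j = unit_vec m j" if j: "j < m" for j
  proof -
    have "?M ^\<^sub>m k *\<^sub>v unit_vec m j = ?M ^\<^sub>m k *\<^sub>v (?M ^\<^sub>m j *\<^sub>v unit_vec m 0)" using compm_pow_e0[OF j] by simp
    also have "\<dots> = (?M ^\<^sub>m k * ?M ^\<^sub>m j) *\<^sub>v unit_vec m 0" by (rule assoc_mult_mat_vec[symmetric]) auto
    also have "\<dots> = (?M ^\<^sub>m j * ?M ^\<^sub>m k) *\<^sub>v unit_vec m 0" using pow_mat_comm[OF C] by simp
    also have "\<dots> = ?M ^\<^sub>m j *\<^sub>v (?M ^\<^sub>m k *\<^sub>v unit_vec m 0)" by (rule assoc_mult_mat_vec) auto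
    also have "\<dots> = unit_vec m j" using h compm_pow_e0[OF j] by simp
    finally show ?thesis .
  qed
  show "?M ^\<^sub>m k = 1\<^sub>m m"
  proof (rule eq_matI)
    fix i j assume i: "i < dim_row (1\<^sub>m m)" and j: "j < dim_col (1\<^sub>m m)"
    then have i: "i < m" and j: "j < m" by auto
    have "(?M ^\<^sub>m k) $$ (i,j) = (?M ^\<^sub>m k *\<^sub>v unit_vec m j) $ i" using mat_unit_idx[of "?M ^\<^sub>m k" m i j] i j by simp
    also have "\<dots> = 1\<^sub>m m $$ (i,j)" using col[OF j] i j by simp
    finally show "(?M ^\<^sub>m k) $$ (i,j) = 1\<^sub>m m $$ (i,j)" .
  qed auto
qed



lemma compm_pow_Suc_vec: "compm m c ^\<^sub>m Suc k *\<^sub>v v = compm m c *\<^sub>v (compm m c ^\<^sub>m k *\<^sub>v v)"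
  if "v \<in> carrier_vec m" for v
  unfolding pow_mat_Suc_left[OF compm_carrier] by (rule assoc_mult_mat_vec) (use that in auto)

lemma A_shift: assumes j: "Suc j < r"
  shows "compm r c1 *\<^sub>v unit_vec r j = unit_vec r (Suc j)"
proof (rule eq_vecI)
  fix i assume "i < dim_vec (unit_vec r (Suc j))" then have i: "i < r" by simp
  show "(compm r c1 *\<^sub>v unit_vec r j) $ i = unit_vec r (Suc j) $ i"
    using compm_mult_vec[OF unit_vec_carrier i] i j by (auto simp: c1_def)
qed simp

lemma A_wrap: assumes r: "0 < r"
  shows "compm r c1 *\<^sub>v unit_vec r (r - 1) = - unit_vec r 0"
proof (rule eq_vecI)
  fix i assume "i < dim_vec (- unit_vec r 0)" then have i: "i < r" by simp
  show "(compm r c1 *\<^sub>v unit_vec r (r-1)) $ i = (- unit_vec r 0) $ i"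
    using compm_mult_vec[OF unit_vec_carrier i] i r by (auto simp: c1_def)
qed simp

lemma A_pow_e0: assumes r: "0 < r"
  shows "compm r c1 ^\<^sub>m k *\<^sub>v unit_vec r 0 = ((-1) ^ (k div r)) \<cdot>\<^sub>v unit_vec r (k mod r)"
proof (induction k)
  case 0 then show ?case using r by simp
next
  case (Suc k)
  have "compm r c1 ^\<^sub>m Suc k *\<^sub>v unit_vec r 0 = compm r c1 *\<^sub>v (((-1) ^ (k div r)) \<cdot>\<^sub>v unit_vec r (k mod r))"
    using compm_pow_Suc_vec[of "unit_vec r 0" r c1 k] Suc by simp
  also have "\<dots> = ((-1) ^ (k div r)) \<cdot>\<^sub>v (compm r c1 *\<^sub>v unit_vec r (k mod r))"
    by (rule mult_mat_vec) auto
  also have "\<dots> = ((-1) ^ (Suc k div r)) \<cdot>\<^sub>v unit_vec r (Suc k mod r)"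
  proof (cases "Suc (k mod r) < r")
    case True
    then have "Suc k mod r = Suc (k mod r)" "Suc k div r = k div r"
      by (simp_all add: mod_Suc div_Suc)
    then show ?thesis using A_shift[OF True] by simp
  next
    case False
    have "k mod r < r" using r by simp
    then have km: "k mod r = r - 1" using False by linarith
    then have "Suc k mod r = 0" "Suc k div r = Suc (k div r)" using r
      by (simp_all add: mod_Suc div_Suc)
    then show ?thesis using A_wrap[OF r] km by (auto intro!: eq_vecI)
  qed
  finally show ?case .
qed

lemma A_pow_one_iff: assumes r: "0 < r"
  shows "compm r c1 ^\<^sub>m k = 1\<^sub>m r \<longleftrightarrow> 2 * r dvd k"
proof -
  have "compm r c1 ^\<^sub>m k = 1\<^sub>m r \<longleftrightarrow> ((-1) ^ (k div r)) \<cdot>\<^sub>v unit_vec r (k mod r) = (unit_vec r 0 :: rat vec)"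
    using compm_pow_one_iff[OF r, of c1 k] A_pow_e0[OF r, of k] by simp
  also have "\<dots> \<longleftrightarrow> k mod r = 0 \<and> even (k div r)"
  proof
    assume h: "((-1) ^ (k div r)) \<cdot>\<^sub>v unit_vec r (k mod r) = (unit_vec r 0 :: rat vec)"
    have "(((-1) ^ (k div r)) \<cdot>\<^sub>v unit_vec r (k mod r)) $ 0 = (unit_vec r 0 :: rat vec) $ 0" using h by simp
    then have "(-1::rat) ^ (k div r) * (if k mod r = 0 then 1 else 0) = 1" using r by simp
    then show "k mod r = 0 \<and> even (k div r)"
      by (cases "k mod r = 0") (auto simp: minus_one_power_iff split: if_splits)
  next
    assume "k mod r = 0 \<and> even (k div r)"
    then show "((-1) ^ (k div r)) \<cdot>\<^sub>v unit_vec r (k mod r) = (unit_vec r 0 :: rat vec)" by simp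
  qed
  also have "\<dots> \<longleftrightarrow> 2 * r dvd k"
  proof
    assume "k mod r = 0 \<and> even (k div r)"
    then have k: "k = r * (k div r)" and e: "even (k div r)" using div_mult_mod_eq[of k r] by (simp_all add: ac_simps)
    from e obtain t where "k div r = 2 * t" by (elim evenE)
    with k have "k = (2 * r) * t" by simp
    then show "2 * r dvd k" by simp
  next
    assume "2 * r dvd k"
    then obtain q where q: "k = 2 * r * q" by blast
    then show "k mod r = 0 \<and> even (k div r)" using r by simp
  qed
  finally show ?thesis .
qed



lemma seven_cases: "(i::nat) < 7 \<Longrightarrow> i = 0 \<or> i = 1 \<or> i = 2 \<or> i = 3 \<or> i = 4 \<or> i = 5 \<or> i = 6" by arith

definition w7 :: "rat vec" where "w7 = vec 7 (\<lambda>i. - c2 i)"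
definition w8 :: "rat vec" where "w8 = vec 7 (\<lambda>i. if i = 0 then 1 else if i = 2 then -1 else if i = 3 then -1 else if i = 5 then 1 else if i = 6 then 1 else 0)"

lemma B_step6: "compm 7 c2 *\<^sub>v unit_vec 7 6 = w7"
proof (rule eq_vecI)
  fix i assume "i < dim_vec w7" then have i: "i < 7" by (simp add: w7_def)
  show "(compm 7 c2 *\<^sub>v unit_vec 7 6) $ i = w7 $ i"
    unfolding compm_mult_vec[OF unit_vec_carrier i] using seven_cases[OF i] by (auto simp: w7_def c2_def)
qed (simp add: w7_def)

lemma B_step7: "compm 7 c2 *\<^sub>v w7 = w8"
proof (rule eq_vecI)
  fix i assume "i < dim_vec w8" then have i: "i < 7" by (simp add: w8_def)
  have v: "w7 \<in> carrier_vec 7" by (simp add: w7_def)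
  show "(compm 7 c2 *\<^sub>v w7) $ i = w8 $ i"
    unfolding compm_mult_vec[OF v i] using seven_cases[OF i] by (auto simp: w7_def w8_def c2_def)
qed (simp add: w8_def)

lemma B_step8: "compm 7 c2 *\<^sub>v w8 = - unit_vec 7 0"
proof (rule eq_vecI)
  fix i assume "i < dim_vec (- unit_vec 7 0 :: rat vec)" then have i: "i < 7" by simp
  have v: "w8 \<in> carrier_vec 7" by (simp add: w8_def)
  show "(compm 7 c2 *\<^sub>v w8) $ i = (- unit_vec 7 0) $ i"
    unfolding compm_mult_vec[OF v i] using seven_cases[OF i] by (auto simp: w8_def c2_def)
qed (simp add: w8_def)

lemma B_pow7: "compm 7 c2 ^\<^sub>m 7 *\<^sub>v unit_vec 7 0 = w7"
  using compm_pow_Suc_vec[of "unit_vec 7 0" 7 c2 6] compm_pow_e0[of 6 7 c2] B_step6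
  by (simp add: numeral_eq_Suc)

lemma B_pow8: "compm 7 c2 ^\<^sub>m 8 *\<^sub>v unit_vec 7 0 = w8"
  using compm_pow_Suc_vec[of "unit_vec 7 0" 7 c2 7] B_pow7 B_step7
  by (simp add: numeral_eq_Suc del: pow_mat.simps)

lemma B_pow9: "compm 7 c2 ^\<^sub>m 9 *\<^sub>v unit_vec 7 0 = - unit_vec 7 0"
  using compm_pow_Suc_vec[of "unit_vec 7 0" 7 c2 8] B_pow8 B_step8
  by (simp add: numeral_eq_Suc del: pow_mat.simps)



lemma B_pow9q: "compm 7 c2 ^\<^sub>m (9 * q) *\<^sub>v unit_vec 7 0 = ((-1) ^ q) \<cdot>\<^sub>v unit_vec 7 0"
proof (induction q)
  case 0 then show ?case by simp
next
  case (Suc q)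
  let ?B = "compm 7 c2"
  have "?B ^\<^sub>m (9 * Suc q) = ?B ^\<^sub>m 9 * ?B ^\<^sub>m (9 * q)"
    using pow_mat_add[OF compm_carrier, of 7 c2 9 "9 * q"] by simp
  then have "?B ^\<^sub>m (9 * Suc q) *\<^sub>v unit_vec 7 0 = ?B ^\<^sub>m 9 *\<^sub>v (?B ^\<^sub>m (9 * q) *\<^sub>v unit_vec 7 0)"
    by (simp only:) (rule assoc_mult_mat_vec, auto)
  also have "\<dots> = ?B ^\<^sub>m 9 *\<^sub>v (((-1) ^ q) \<cdot>\<^sub>v unit_vec 7 0)" using Suc by simp
  also have "\<dots> = ((-1) ^ q) \<cdot>\<^sub>v (?B ^\<^sub>m 9 *\<^sub>v unit_vec 7 0)" by (rule mult_mat_vec) auto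
  also have "\<dots> = ((-1) ^ Suc q) \<cdot>\<^sub>v unit_vec 7 0" unfolding B_pow9 by (auto intro!: eq_vecI)
  finally show ?case .
qed

lemma B_pow_e0: "compm 7 c2 ^\<^sub>m k *\<^sub>v unit_vec 7 0 = ((-1) ^ (k div 9)) \<cdot>\<^sub>v (compm 7 c2 ^\<^sub>m (k mod 9) *\<^sub>v unit_vec 7 0)"
proof -
  let ?B = "compm 7 c2"
  have k: "k = k mod 9 + 9 * (k div 9)" by simp
  have "?B ^\<^sub>m k = ?B ^\<^sub>m (k mod 9) * ?B ^\<^sub>m (9 * (k div 9))"
    using pow_mat_add[OF compm_carrier, of 7 c2 "k mod 9" "9 * (k div 9)"] k by simp
  then have "?B ^\<^sub>m k *\<^sub>v unit_vec 7 0 = ?B ^\<^sub>m (k mod 9) *\<^sub>v (?B ^\<^sub>m (9 * (k div 9)) *\<^sub>v unit_vec 7 0)"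
    by (simp only:) (rule assoc_mult_mat_vec, auto)
  also have "\<dots> = ?B ^\<^sub>m (k mod 9) *\<^sub>v (((-1) ^ (k div 9)) \<cdot>\<^sub>v unit_vec 7 0)" unfolding B_pow9q ..
  also have "\<dots> = ((-1) ^ (k div 9)) \<cdot>\<^sub>v (?B ^\<^sub>m (k mod 9) *\<^sub>v unit_vec 7 0)" by (rule mult_mat_vec) auto
  finally show ?thesis .
qed

lemma B_pow_nonid: assumes s: "0 < s" "s < 9"
  shows "\<exists>idx. 0 < idx \<and> idx < 7 \<and> (compm 7 c2 ^\<^sub>m s *\<^sub>v unit_vec 7 0) $ idx \<noteq> 0"
proof (cases "s < 7")
  case True
  then show ?thesis using s compm_pow_e0[OF True, of c2] by (intro exI[of _ s]) simp
next
  case False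
  then have "s = 7 \<or> s = 8" using s by arith
  then show ?thesis
  proof
    assume "s = 7" then show ?thesis using B_pow7 by (intro exI[of _ 1]) (simp add: w7_def c2_def)
  next
    assume "s = 8" then show ?thesis using B_pow8 by (intro exI[of _ 2]) (simp add: w8_def)
  qed
qed

lemma B_pow_one_iff: "compm 7 c2 ^\<^sub>m k = 1\<^sub>m 7 \<longleftrightarrow> 18 dvd k"
proof -
  let ?B = "compm 7 c2"
  have "?B ^\<^sub>m k = 1\<^sub>m 7 \<longleftrightarrow> ((-1) ^ (k div 9)) \<cdot>\<^sub>v (?B ^\<^sub>m (k mod 9) *\<^sub>v unit_vec 7 0) = (unit_vec 7 0 :: rat vec)"
    using compm_pow_one_iff[of 7 c2 k] B_pow_e0[of k] by simp
  also have "\<dots> \<longleftrightarrow> k mod 9 = 0 \<and> even (k div 9)"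
  proof
    assume h: "((-1) ^ (k div 9)) \<cdot>\<^sub>v (?B ^\<^sub>m (k mod 9) *\<^sub>v unit_vec 7 0) = (unit_vec 7 0 :: rat vec)"
    show "k mod 9 = 0 \<and> even (k div 9)"
    proof (cases "k mod 9 = 0")
      case True
      have "(((-1) ^ (k div 9)) \<cdot>\<^sub>v (?B ^\<^sub>m (k mod 9) *\<^sub>v unit_vec 7 0)) $ 0 = (unit_vec 7 0 :: rat vec) $ 0" using h by simp
      then have "(-1::rat) ^ (k div 9) = 1" using True by simp
      then show ?thesis using True by (auto simp: minus_one_power_iff split: if_splits)
    next
      case False
      then obtain idx where idx: "0 < idx" "idx < 7" "(?B ^\<^sub>m (k mod 9) *\<^sub>v unit_vec 7 0) $ idx \<noteq> 0"
        using B_pow_nonid[of "k mod 9"] by auto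
      have "(((-1) ^ (k div 9)) \<cdot>\<^sub>v (?B ^\<^sub>m (k mod 9) *\<^sub>v unit_vec 7 0)) $ idx = (unit_vec 7 0 :: rat vec) $ idx" using h by simp
      then have "(-1::rat) ^ (k div 9) * (?B ^\<^sub>m (k mod 9) *\<^sub>v unit_vec 7 0) $ idx = 0" using idx by simp
      then show ?thesis using idx by simp
    qed
  next
    assume "k mod 9 = 0 \<and> even (k div 9)"
    then show "((-1) ^ (k div 9)) \<cdot>\<^sub>v (?B ^\<^sub>m (k mod 9) *\<^sub>v unit_vec 7 0) = (unit_vec 7 0 :: rat vec)" by simp
  qed
  also have "\<dots> \<longleftrightarrow> 18 dvd k"
  proof
    assume "k mod 9 = 0 \<and> even (k div 9)"
    then have k: "k = 9 * (k div 9)" and e: "even (k div 9)" using div_mult_mod_eq[of k 9] by (simp_all add: ac_simps)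
    from e obtain t where "k div 9 = 2 * t" by (elim evenE)
    with k have "k = 18 * t" by simp
    then show "18 dvd k" by simp
  next
    assume "18 dvd k"
    then obtain q where q: "k = 18 * q" by blast
    then show "k mod 9 = 0 \<and> even (k div 9)" by simp
  qed
  finally show ?thesis .
qed



lemma PhiM_pow_one_iff: assumes r: "r \<ge> 9"
  shows "PhiM r ^\<^sub>m k = 1\<^sub>m (r+7) \<longleftrightarrow> lcm (2 * r) 9 dvd k"
proof -
  obtain Q where w: "similar_mat_wit (PhiM r) (DD r) (PP r) Q" using PhiM_wit[OF r] by blast
  have w': "similar_mat_wit (DD r) (PhiM r) Q (PP r)" by (rule similar_mat_wit_sym[OF w])
  have Q: "Q \<in> carrier_mat (r+7) (r+7)" and PQ: "PP r * Q = 1\<^sub>m (r+7)" and QP: "Q * PP r = 1\<^sub>m (r+7)"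
    using w unfolding similar_mat_wit_def Let_def by auto
  have e1: "PhiM r ^\<^sub>m k = PP r * DD r ^\<^sub>m k * Q" by (rule similar_mat_wit_pow_id[OF w])
  have e2: "DD r ^\<^sub>m k = Q * PhiM r ^\<^sub>m k * PP r" by (rule similar_mat_wit_pow_id[OF w'])
  have iff1: "PhiM r ^\<^sub>m k = 1\<^sub>m (r+7) \<longleftrightarrow> DD r ^\<^sub>m k = 1\<^sub>m (r+7)"
  proof
    assume "PhiM r ^\<^sub>m k = 1\<^sub>m (r+7)"
    then have "DD r ^\<^sub>m k = Q * 1\<^sub>m (r+7) * PP r" using e2 by simp
    also have "\<dots> = 1\<^sub>m (r+7)" using Q QP by simp
    finally show "DD r ^\<^sub>m k = 1\<^sub>m (r+7)" .
  next
    assume "DD r ^\<^sub>m k = 1\<^sub>m (r+7)"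
    then have "PhiM r ^\<^sub>m k = PP r * 1\<^sub>m (r+7) * Q" using e1 by simp
    also have "\<dots> = 1\<^sub>m (r+7)" using PQ by simp
    finally show "PhiM r ^\<^sub>m k = 1\<^sub>m (r+7)" .
  qed
  let ?A = "compm r c1" and ?B = "compm 7 c2"
  have Dk: "DD r ^\<^sub>m k = four_block_mat (?A ^\<^sub>m k) (0\<^sub>m r 7) (0\<^sub>m 7 r) (?B ^\<^sub>m k)"
    unfolding DD_block[OF r] by (rule pow_four_block_mat) auto
  have iff2: "DD r ^\<^sub>m k = 1\<^sub>m (r+7) \<longleftrightarrow> ?A ^\<^sub>m k = 1\<^sub>m r \<and> ?B ^\<^sub>m k = 1\<^sub>m 7"
  proof
    assume h: "DD r ^\<^sub>m k = 1\<^sub>m (r+7)"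
    have hA: "?A ^\<^sub>m k = 1\<^sub>m r"
    proof (rule eq_matI)
      fix i j assume "i < dim_row (1\<^sub>m r)" "j < dim_col (1\<^sub>m r)"
      then have i: "i < r" and j: "j < r" by auto
      have "(DD r ^\<^sub>m k) $$ (i,j) = 1\<^sub>m (r+7) $$ (i,j)" using h by simp
      moreover have "(DD r ^\<^sub>m k) $$ (i,j) = (?A ^\<^sub>m k) $$ (i,j)"
        unfolding Dk using i j pow_carrier_mat[OF compm_carrier[of r c1], of k] pow_carrier_mat[OF compm_carrier[of 7 c2], of k]
        by (subst index_mat_four_block) auto
      ultimately show "(?A ^\<^sub>m k) $$ (i,j) = 1\<^sub>m r $$ (i,j)" using i j by simp
    qed auto
    have hB: "?B ^\<^sub>m k = 1\<^sub>m 7"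
    proof (rule eq_matI)
      fix i j assume "i < dim_row (1\<^sub>m 7)" "j < dim_col (1\<^sub>m 7)"
      then have i: "i < 7" and j: "j < 7" by auto
      have "(DD r ^\<^sub>m k) $$ (r+i,r+j) = 1\<^sub>m (r+7) $$ (r+i,r+j)" using h by simp
      moreover have "(DD r ^\<^sub>m k) $$ (r+i,r+j) = (?B ^\<^sub>m k) $$ (i,j)"
        unfolding Dk using i j pow_carrier_mat[OF compm_carrier[of r c1], of k] pow_carrier_mat[OF compm_carrier[of 7 c2], of k]
        by (subst index_mat_four_block) auto
      ultimately show "(?B ^\<^sub>m k) $$ (i,j) = 1\<^sub>m 7 $$ (i,j)" using i j by simp
    qed auto
    show "?A ^\<^sub>m k = 1\<^sub>m r \<and> ?B ^\<^sub>m k = 1\<^sub>m 7" using hA hB by simp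
  next
    assume "?A ^\<^sub>m k = 1\<^sub>m r \<and> ?B ^\<^sub>m k = 1\<^sub>m 7"
    then show "DD r ^\<^sub>m k = 1\<^sub>m (r+7)" unfolding Dk by simp
  qed
  have r0: "0 < r" using r by simp
  have "PhiM r ^\<^sub>m k = 1\<^sub>m (r+7) \<longleftrightarrow> 2 * r dvd k \<and> 18 dvd k"
    unfolding iff1 iff2 A_pow_one_iff[OF r0] B_pow_one_iff ..
  also have "\<dots> \<longleftrightarrow> 2 * r dvd k \<and> 9 dvd k"
  proof -
    have "2 * r dvd k \<Longrightarrow> 2 dvd k" by (metis dvd_mult_left)
    moreover have "(18 dvd k) = (2 dvd k \<and> 9 dvd (k::nat))" by presburger
    ultimately show ?thesis by blast
  qed
  also have "\<dots> \<longleftrightarrow> lcm (2 * r) 9 dvd k" by (simp add: lcm_least_iff)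
  finally show ?thesis .
qed

theorem proposition6p1:
  fixes r :: nat
  assumes "r \<ge> 9"
  shows "coxeter_polynomial (nakayama_cartan (r + 7) r) =
           ([:1, 1:] * (monom 1 6 - monom 1 3 + 1) * (monom 1 r + 1))
       \<and> is_coxeter_number (nakayama_cartan (r + 7) r) (lcm (2 * r) 9)"
proof
  show "coxeter_polynomial (nakayama_cartan (r + 7) r) =
           ([:1, 1:] * (monom 1 6 - monom 1 3 + 1) * (monom 1 r + 1))"
    unfolding coxeter_polynomial_def coxeter_PhiM[OF assms] by (rule char_poly_PhiM[OF assms])
next
  let ?L = "lcm (2 * r) 9"
  have dim: "dim_row (nakayama_cartan (r + 7) r) = r + 7" by (simp add: nakayama_cartan_def)
  have L: "?L \<ge> 1" using assms by (simp add: Suc_le_eq lcm_pos_nat)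
  show "is_coxeter_number (nakayama_cartan (r + 7) r) ?L"
    unfolding is_coxeter_number_def dim coxeter_PhiM[OF assms]
  proof (intro conjI allI impI)
    show "1 \<le> ?L" by (rule L)
    show "PhiM r ^\<^sub>m ?L = 1\<^sub>m (r + 7)" using PhiM_pow_one_iff[OF assms] by simp
    fix k assume k: "1 \<le> k \<and> k < ?L"
    show "PhiM r ^\<^sub>m k \<noteq> 1\<^sub>m (r + 7)"
    proof
      assume "PhiM r ^\<^sub>m k = 1\<^sub>m (r + 7)"
      then have "?L dvd k" using PhiM_pow_one_iff[OF assms] by simp
      then have "?L \<le> k" using k by (intro dvd_imp_le) auto
      then show False using k by simp
    qed
  qed
qed


end
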